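(* Assume that for all $0\le i,j\le d$: $E^*_iAE^*_j=0$ if $i-j>1$, and $E^*_iAE^*_j\ne0$ if $i-j=1$. Let $v^*_0$ be a nonzero vector in $E^*_0V$. Then the $\mathbb K$-linear map $\mathcal D\to V$, $X\mapsto Xv^*_0$, is an isomorphism of $\mathbb K$-vector spaces.
   Context: Let $\mathbb K$ be a field, $d\ge 0$ an integer, and $\mathcal A$ a $\mathbb K$-algebra isomorphic to $\mathrm{Mat}_{d+1}(\mathbb K)$, with identity $I$. An element of $\mathcal A$ is multiplicity-free if it has $d+1$ mutually distinct eigenvalues, all in $\mathbb K$; for such $A$ with eigenvalues $\theta_0,\ldots,\theta_d$, the primitive idempotent associated with $\theta_i$ is $E_i=\prod_{j\ne i}(A-\theta_jI)/(\theta_i-\theta_j)$. Standing setup: $A,A^*$ are multiplicity-free elements of $\mathcal A$ ($A^*$ is just a name, not an adjoint); $E_0,\ldots,E_d$ is an ordering of the primitive idempotents of $A$; $E^*_0,\ldots,E^*_d$ is an ordering of the primitive idempotents of $A^*$; $\mathcal D$ is the subalgebra of $\mathcal A$ generated by $A$; $V$ is an irreducible left $\mathcal A$-module. *)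

theory Defs
  imports "HOL-Analysis.Analysis" "HOL-Computational_Algebra.Polynomial"
begin

text \<open>The algebra is modelled concretely as the (d+1) x (d+1) matrices over a field K,
  with index type 'n and CARD('n) = d+1; matrix product is (**), identity is mat 1,
  and the scalar multiple c X is written mat c ** X.\<close>

primrec mat_pow :: "('a::semiring_1)^'n^'n \<Rightarrow> nat \<Rightarrow> 'a^'n^'n" where
  "mat_pow X 0 = mat 1"
| "mat_pow X (Suc k) = X ** mat_pow X k"

definition poly_mat :: "('a::field) poly \<Rightarrow> 'a^'n^'n \<Rightarrow> 'a^'n^'n" where
  "poly_mat p X = (\<Sum>k\<le>degree p. mat (coeff p k) ** mat_pow X k)"

definition gen_subalg :: "('a::field)^'n^'n \<Rightarrow> ('a^'n^'n) set" where
  "gen_subalg X = {poly_mat p X | p. True}"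

definition mf_eigs :: "('a::field)^'n^'n \<Rightarrow> (nat \<Rightarrow> 'a) \<Rightarrow> bool" where
  "mf_eigs X \<theta> \<longleftrightarrow> inj_on \<theta> {..<CARD('n)} \<and>
     (\<forall>i<CARD('n). \<exists>v. v \<noteq> 0 \<and> X *v v = \<theta> i *s v)"

definition multiplicity_free :: "('a::field)^'n^'n \<Rightarrow> bool" where
  "multiplicity_free X \<longleftrightarrow> (\<exists>\<theta>. mf_eigs X \<theta>)"

text \<open>Primitive idempotent E_i = prod_{j /= i} (X - theta_j I)/(theta_i - theta_j).
  (The factors commute, so the order of the product is irrelevant.)\<close>
definition prim_idem :: "('a::field)^'n^'n \<Rightarrow> (nat \<Rightarrow> 'a) \<Rightarrow> nat \<Rightarrow> 'a^'n^'n" where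
  "prim_idem X \<theta> i =
     foldr (\<lambda>j M. (mat (inverse (\<theta> i - \<theta> j)) ** (X - mat (\<theta> j))) ** M)
       (filter (\<lambda>j. j \<noteq> i) [0..<CARD('n)]) (mat 1)"

definition idem_ordering :: "('a::field)^'n^'n \<Rightarrow> (nat \<Rightarrow> 'a^'n^'n) \<Rightarrow> bool" where
  "idem_ordering X E \<longleftrightarrow>
     (\<exists>\<theta>. mf_eigs X \<theta> \<and> (\<forall>i<CARD('n). E i = prim_idem X \<theta> i))"

text \<open>V (the universe of type 'v) is a left module over the matrix algebra via act,
  with underlying K-vector space structure given by sc.\<close>
definition alg_module ::
  "('a::field \<Rightarrow> 'v::ab_group_add \<Rightarrow> 'v) \<Rightarrow> ('a^'n^'n \<Rightarrow> 'v \<Rightarrow> 'v) \<Rightarrow> bool" where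
  "alg_module sc act \<longleftrightarrow> vector_space sc \<and>
     (\<forall>X Y v. act (X ** Y) v = act X (act Y v)) \<and>
     (\<forall>v. act (mat 1) v = v) \<and>
     (\<forall>X Y v. act (X + Y) v = act X v + act Y v) \<and>
     (\<forall>X u w. act X (u + w) = act X u + act X w) \<and>
     (\<forall>c X v. act (mat c ** X) v = sc c (act X v)) \<and>
     (\<forall>c X v. act X (sc c v) = sc c (act X v))"

definition irreducible_module ::
  "('a::field \<Rightarrow> 'v::ab_group_add \<Rightarrow> 'v) \<Rightarrow> ('a^'n^'n \<Rightarrow> 'v \<Rightarrow> 'v) \<Rightarrow> bool" where
  "irreducible_module sc act \<longleftrightarrow> alg_module sc act \<and> (\<exists>v::'v. v \<noteq> 0) \<and>
     (\<forall>W. 0 \<in> W \<and> (\<forall>u\<in>W. \<forall>w\<in>W. u + w \<in> W) \<and> (\<forall>X. \<forall>w\<in>W. act X w \<in> W)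
          \<longrightarrow> W = {0} \<or> W = UNIV)"

end

theory Submission
  imports Defs
begin

lemma sum_delta_l: "(\<Sum>k\<in>UNIV. (if i = k then c else 0) * f k) = c * (f i)" for f :: "'n::finite \<Rightarrow> 'a::comm_ring_1"
proof -
  have "(\<Sum>k\<in>UNIV. (if i = k then c else 0) * f k) = (\<Sum>k\<in>UNIV. if i = k then c * f k else 0)"
    by (rule sum.cong) auto
  then show ?thesis by simp
qed

lemma sum_delta_r: "(\<Sum>k\<in>UNIV. f k * (if k = j then c else 0)) = c * (f j)" for f :: "'n::finite \<Rightarrow> 'a::comm_ring_1"
proof -
  have "(\<Sum>k\<in>UNIV. f k * (if k = j then c else 0)) = (\<Sum>k\<in>UNIV. if k = j then c * f k else 0)"
    by (rule sum.cong) (auto simp: mult.commute)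
  then show ?thesis by simp
qed

lemma mat_mul_left: "mat c ** (X::'a::comm_ring_1^'n^'m) = (\<chi> i j. c * X$i$j)"
  unfolding matrix_matrix_mult_def mat_def vec_eq_iff 
  by (simp add: sum_delta_l)

lemma mat_mul_right: "(X::'a::comm_ring_1^'n^'m) ** mat c = (\<chi> i j. c * X$i$j)"
  unfolding matrix_matrix_mult_def mat_def vec_eq_iff 
  by (simp add: sum_delta_r)

lemma mat_mulv: "mat c *v (v::'a::comm_ring_1^'n) = c *s v"
  by (simp add: matrix_vector_mult_def mat_def vec_eq_iff if_distrib if_distribR sum.delta cong: if_cong)


lemma mat_comm: "mat c ** (X::'a::comm_ring_1^'n^'n) = X ** mat c"
  by (simp only: mat_mul_left mat_mul_right)

lemma mat_mat: "mat c ** mat d = (mat (c*d) :: 'a::comm_ring_1^'n^'n)"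
  unfolding mat_mul_left by (simp add: mat_def vec_eq_iff)

lemma scal_mid: "(X::'a::comm_ring_1^'n^'n) ** (mat c ** Y) = mat c ** (X ** (Y::'a::comm_ring_1^'n^'n))"
proof -
  have "X ** (mat c ** Y) = X ** (Y ** mat c)" by (simp only: mat_comm)
  also have "\<dots> = (X ** Y) ** mat c" by (rule matrix_mul_assoc)
  also have "\<dots> = mat c ** (X ** Y)" by (simp only: mat_comm)
  finally show ?thesis .
qed

lemma scal_mulv: "(mat c ** X) *v v = c *s (X *v (v::'a::comm_ring_1^'n))"
  by (simp only: matrix_vector_mul_assoc[symmetric] mat_mulv)

lemma foldr_apply:
  fixes X :: "'a::field^'n^'n"
  assumes "X *v v = \<mu> *s v"
  shows "foldr (\<lambda>j M. (mat (c j) ** (X - mat (\<theta> j))) ** M) js (mat 1) *v v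
     = prod_list (map (\<lambda>j. c j * (\<mu> - \<theta> j)) js) *s v"
proof (induction js)
  case Nil then show ?case by simp
next
  case (Cons j js)
  have "foldr (\<lambda>j M. (mat (c j) ** (X - mat (\<theta> j))) ** M) (j#js) (mat 1) *v v
    = (mat (c j) ** (X - mat (\<theta> j))) *v (foldr (\<lambda>j M. (mat (c j) ** (X - mat (\<theta> j))) ** M) js (mat 1) *v v)"
    by (simp add: matrix_vector_mul_assoc)
  also have "\<dots> = (mat (c j) ** (X - mat (\<theta> j))) *v (prod_list (map (\<lambda>j. c j * (\<mu> - \<theta> j)) js) *s v)"
    using Cons by simp
  also have "\<dots> = (c j * (\<mu> - \<theta> j) * prod_list (map (\<lambda>j. c j * (\<mu> - \<theta> j)) js)) *s v"
    using assms by (simp add: scal_mulv vec.scale matrix_vector_mult_diff_rdistrib mat_mulv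
        vector_smult_assoc algebra_simps vector_ssub_ldistrib)
  finally show ?case by simp
qed
lemma prod_list_one: "(\<forall>x\<in>set xs. f x = (1::'a::comm_monoid_mult)) \<Longrightarrow> prod_list (map f xs) = 1"
  by (induction xs) auto

lemma prim_idem_eig:
  fixes X :: "'a::field^'n^'n"
  assumes mf: "mf_eigs X \<theta>" and vv: "\<forall>k<CARD('n). X *v vv k = \<theta> k *s vv k"
    and i: "i < CARD('n)" and k: "k < CARD('n)"
  shows "prim_idem X \<theta> i *v vv k = (if k = i then vv k else 0)"
proof -
  have inj: "inj_on \<theta> {..<CARD('n)}" using mf by (simp add: mf_eigs_def)
  have "prim_idem X \<theta> i *v vv k = prod_list (map (\<lambda>j. inverse (\<theta> i - \<theta> j) * (\<theta> k - \<theta> j))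
      (filter (\<lambda>j. j \<noteq> i) [0..<CARD('n)])) *s vv k"
    unfolding prim_idem_def using vv k by (intro foldr_apply) auto
  also have "\<dots> = (if k = i then vv k else 0)"
  proof (cases "k = i")
    case True
    have "\<forall>j\<in>set (filter (\<lambda>j. j \<noteq> i) [0..<CARD('n)]). inverse (\<theta> i - \<theta> j) * (\<theta> k - \<theta> j) = 1"
    proof
      fix j assume "j \<in> set (filter (\<lambda>j. j \<noteq> i) [0..<CARD('n)])"
      then have "j < CARD('n)" "j \<noteq> i" by auto
      then have "\<theta> i \<noteq> \<theta> j" using inj i by (auto dest: inj_onD)
      then show "inverse (\<theta> i - \<theta> j) * (\<theta> k - \<theta> j) = 1" using True by simp
    qed
    then show ?thesis using True by (simp add: prod_list_one)
  next
    case False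
    have "k \<in> set (filter (\<lambda>j. j \<noteq> i) [0..<CARD('n)])" using False k by auto
    then have "0 \<in> set (map (\<lambda>j. inverse (\<theta> i - \<theta> j) * (\<theta> k - \<theta> j)) (filter (\<lambda>j. j \<noteq> i) [0..<CARD('n)]))"
      by (auto simp: image_iff intro!: bexI[where x=k])
    then show ?thesis using False by (simp add: prod_list_zero_iff)
  qed
  finally show ?thesis .
qed

lemma matrix_add_rdistrib: "((A::'a::comm_ring_1^'n^'m) + B) ** C = A ** C + B ** C"
  by (vector matrix_matrix_mult_def sum.distrib distrib_right)

lemma matrix_diff_ldistrib: "(A::'a::comm_ring_1^'n^'m) ** (B - C) = A ** B - A ** C"
  by (vector matrix_matrix_mult_def sum_subtractf right_diff_distrib)

lemma matrix_diff_rdistrib: "((A::'a::comm_ring_1^'n^'m) - B) ** C = A ** C - B ** C"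
  by (vector matrix_matrix_mult_def sum_subtractf left_diff_distrib)

lemma mv_sum: "(A::'a::comm_ring_1^'n^'m) *v sum f S = sum (\<lambda>x. A *v f x) S"
  by (induction S rule: infinite_finite_induct) (simp_all add: matrix_vector_right_distrib)

lemma msum_v: "sum f S *v (v::'a::comm_ring_1^'n) = sum (\<lambda>x. f x *v v) S"
  by (induction S rule: infinite_finite_induct) (simp_all add: matrix_vector_mult_add_rdistrib)

lemma msum_mult: "sum f S ** (M::'a::comm_ring_1^'n^'n) = sum (\<lambda>x. f x ** M) S"
  by (induction S rule: infinite_finite_induct) (simp_all add: matrix_add_rdistrib)

lemma mult_msum: "(M::'a::comm_ring_1^'n^'n) ** sum f S = sum (\<lambda>x. M ** f x) S"
  by (induction S rule: infinite_finite_induct) (simp_all add: matrix_add_ldistrib)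

lemma mat_eq_span:
  fixes X Y :: "'a::field^'n^'n"
  assumes "vec.span B = UNIV" "\<forall>b\<in>B. X *v b = Y *v b"
  shows "X = Y"
proof -
  have "X *v w = Y *v w" for w
  proof -
    have "w \<in> vec.span B" using assms by simp
    then show ?thesis
    proof (induction rule: vec.span_induct_alt)
      case base then show ?case by simp
    next
      case (step c x y) then show ?case using assms(2)
        by (simp add: matrix_vector_right_distrib vec.scale)
    qed
  qed
  then show ?thesis by (simp add: matrix_eq)
qed


context
  fixes X :: "'a::field^'n^'n" and \<theta> vv
  assumes mf: "mf_eigs X \<theta>" and vv: "\<forall>k<CARD('n). vv k \<noteq> 0 \<and> X *v vv k = \<theta> k *s vv k"
begin

lemma Eig: "i < CARD('n) \<Longrightarrow> k < CARD('n) \<Longrightarrow> prim_idem X \<theta> i *v vv k = (if k = i then vv k else 0)"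
  using prim_idem_eig[OF mf] vv by blast

lemma vv_inj: "inj_on vv {..<CARD('n)}"
proof (rule inj_onI)
  fix i k assume i: "i \<in> {..<CARD('n)}" and k: "k \<in> {..<CARD('n)}" and eq: "vv i = vv k"
  show "i = k"
  proof (rule ccontr)
    assume "i \<noteq> k"
    then have "prim_idem X \<theta> i *v vv k = 0" using Eig i k by auto
    moreover have "prim_idem X \<theta> i *v vv i = vv i" using Eig i by auto
    ultimately show False using eq vv i by auto
  qed
qed

lemma Eig_B: "i < CARD('n) \<Longrightarrow> v \<in> vv ` {..<CARD('n)} \<Longrightarrow> prim_idem X \<theta> i *v v = (if v = vv i then v else 0)"
  using Eig vv_inj by (auto dest: inj_onD)

lemma Eig_sum: "i < CARD('n) \<Longrightarrow> prim_idem X \<theta> i *v (\<Sum>v\<in>vv ` {..<CARD('n)}. c v *s v) = c (vv i) *s vv i"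
proof -
  assume i: "i < CARD('n)"
  have "prim_idem X \<theta> i *v (\<Sum>v\<in>vv ` {..<CARD('n)}. c v *s v) = (\<Sum>v\<in>vv ` {..<CARD('n)}. c v *s (prim_idem X \<theta> i *v v))"
    by (simp add: mv_sum vec.scale)
  also have "\<dots> = (\<Sum>v\<in>vv ` {..<CARD('n)}. if v = vv i then c v *s v else 0)"
    by (rule sum.cong) (simp_all add: Eig_B i)
  also have "\<dots> = c (vv i) *s vv i" using i by (simp add: sum.delta')
  finally show ?thesis .
qed

lemma vv_span: "vec.span (vv ` {..<CARD('n)}) = UNIV"
proof -
  have ind: "vec.independent (vv ` {..<CARD('n)})"
    unfolding vec.independent_explicit
  proof (intro conjI allI impI ballI)
    show "finite (vv ` {..<CARD('n)})" by simp
  next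
    fix c v assume s: "(\<Sum>v\<in>vv ` {..<CARD('n)}. c v *s v) = 0" and v: "v \<in> vv ` {..<CARD('n)}"
    then obtain i where i: "i < CARD('n)" "v = vv i" by auto
    have "c (vv i) *s vv i = 0" using Eig_sum[OF i(1), of c] s by simp
    then show "c v = 0" using vv i by simp
  qed
  have card: "card (vv ` {..<CARD('n)}) = CARD('n)" using vv_inj by (simp add: card_image)
  have "(UNIV::('a^'n) set) \<subseteq> vec.span (vv ` {..<CARD('n)})"
  proof (rule vec.card_ge_dim_independent[OF subset_UNIV ind])
    have "vec.dim (UNIV::('a^'n) set) = CARD('n)" by (rule vec_dim_card)
    then show "vec.dim (UNIV::('a^'n) set) \<le> card (vv ` {..<CARD('n)})" using card by simp
  qed
  then show ?thesis by auto
qed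

lemma E_rank1: "i < CARD('n) \<Longrightarrow> \<exists>c. prim_idem X \<theta> i *v w = c *s vv i"
proof -
  assume i: "i < CARD('n)"
  have "w \<in> vec.span (vv ` {..<CARD('n)})" using vv_span by simp
  then obtain c where "w = (\<Sum>v\<in>vv ` {..<CARD('n)}. c v *s v)"
    by (auto simp: vec.span_finite)
  then show ?thesis using Eig_sum[OF i] by blast
qed

lemma E_eq: "(\<forall>k<CARD('n). (A::'a^'n^'n) *v vv k = B *v vv k) \<Longrightarrow> A = B"
  by (rule mat_eq_span[OF vv_span]) auto

lemma P1: "i < CARD('n) \<Longrightarrow> j < CARD('n) \<Longrightarrow>
   prim_idem X \<theta> i ** prim_idem X \<theta> j = (if i = j then prim_idem X \<theta> i else 0)"
  by (rule E_eq) (auto simp: matrix_vector_mul_assoc[symmetric] Eig)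

lemma P2: "(\<Sum>i<CARD('n). prim_idem X \<theta> i) = mat 1"
proof (rule E_eq, intro allI impI)
  fix k assume k: "k < CARD('n)"
  have "(\<Sum>i<CARD('n). prim_idem X \<theta> i) *v vv k = (\<Sum>i<CARD('n). prim_idem X \<theta> i *v vv k)"
    by (simp add: msum_v)
  also have "\<dots> = (\<Sum>i<CARD('n). if k = i then vv k else 0)"
    by (rule sum.cong) (simp_all add: Eig k)
  also have "\<dots> = vv k" using k by simp
  finally show "(\<Sum>i<CARD('n). prim_idem X \<theta> i) *v vv k = mat 1 *v vv k" by simp
qed

lemma P3: "i < CARD('n) \<Longrightarrow> \<exists>c. prim_idem X \<theta> i ** M ** prim_idem X \<theta> i = mat c ** prim_idem X \<theta> i"
proof -
  assume i: "i < CARD('n)"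
  obtain c where c: "prim_idem X \<theta> i *v (M *v vv i) = c *s vv i" using E_rank1[OF i] by blast
  have "prim_idem X \<theta> i ** M ** prim_idem X \<theta> i = mat c ** prim_idem X \<theta> i"
  proof (rule E_eq, intro allI impI)
    fix k assume k: "k < CARD('n)"
    show "prim_idem X \<theta> i ** M ** prim_idem X \<theta> i *v vv k = mat c ** prim_idem X \<theta> i *v vv k"
      using c by (simp add: matrix_vector_mul_assoc[symmetric] Eig k i scal_mulv mat_mulv)
  qed
  then show ?thesis by blast
qed

end


section \<open>Polynomial subalgebra\<close>

lemma mat_add: "mat (a + b) = (mat a + mat b :: 'a::comm_ring_1^'n^'n)"
  by (vector mat_def)

lemma mat_diff: "mat (a - b) = (mat a - mat b :: 'a::comm_ring_1^'n^'n)"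
  by (vector mat_def)

lemma poly_mat_ext:
  fixes X :: "'a::field^'n^'n"
  assumes "degree p \<le> N"
  shows "poly_mat p X = (\<Sum>k\<le>N. mat (coeff p k) ** mat_pow X k)"
  unfolding poly_mat_def
proof (rule sum.mono_neutral_left)
  show "\<forall>i\<in>{..N} - {..degree p}. mat (coeff p i) ** mat_pow X i = 0"
    by (auto simp: coeff_eq_0)
qed (use assms in auto)

lemma poly_mat_add: "poly_mat (p + q) (X::'a::field^'n^'n) = poly_mat p X + poly_mat q X"
proof -
  let ?N = "max (degree p) (degree q)"
  have "poly_mat (p + q) X = (\<Sum>k\<le>?N. mat (coeff (p+q) k) ** mat_pow X k)"
    by (rule poly_mat_ext) (simp add: degree_add_le)
  also have "\<dots> = (\<Sum>k\<le>?N. mat (coeff p k) ** mat_pow X k) + (\<Sum>k\<le>?N. mat (coeff q k) ** mat_pow X k)"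
    by (simp add: mat_add matrix_add_rdistrib sum.distrib)
  also have "\<dots> = poly_mat p X + poly_mat q X"
    by (simp add: poly_mat_ext[symmetric])
  finally show ?thesis .
qed

lemma poly_mat_diff: "poly_mat (p - q) (X::'a::field^'n^'n) = poly_mat p X - poly_mat q X"
proof -
  let ?N = "max (degree p) (degree q)"
  have "poly_mat (p - q) X = (\<Sum>k\<le>?N. mat (coeff (p-q) k) ** mat_pow X k)"
    by (rule poly_mat_ext) (simp add: degree_diff_le)
  also have "\<dots> = (\<Sum>k\<le>?N. mat (coeff p k) ** mat_pow X k) - (\<Sum>k\<le>?N. mat (coeff q k) ** mat_pow X k)"
    by (simp add: mat_diff matrix_diff_rdistrib sum_subtractf)
  also have "\<dots> = poly_mat p X - poly_mat q X"
    by (simp add: poly_mat_ext[symmetric])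
  finally show ?thesis .
qed

lemma poly_mat_smult: "poly_mat (smult c p) (X::'a::field^'n^'n) = mat c ** poly_mat p X"
proof -
  have "poly_mat (smult c p) X = (\<Sum>k\<le>degree p. mat (coeff (smult c p) k) ** mat_pow X k)"
    by (rule poly_mat_ext) (simp add: degree_smult_le)
  also have "\<dots> = (\<Sum>k\<le>degree p. mat c ** (mat (coeff p k) ** mat_pow X k))"
    by (simp add: mat_mat[symmetric] matrix_mul_assoc)
  also have "\<dots> = mat c ** poly_mat p X"
    by (simp add: poly_mat_def mult_msum)
  finally show ?thesis .
qed

lemma poly_mat_monom: "poly_mat (monom 1 m) (X::'a::field^'n^'n) = mat_pow X m"
proof -
  have "poly_mat (monom 1 m) X = (\<Sum>k\<le>m. mat (coeff (monom 1 m) k) ** mat_pow X k)"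
    by (rule poly_mat_ext) (simp add: degree_monom_le)
  also have "\<dots> = (\<Sum>k\<le>m. if k = m then mat_pow X k else 0)"
    by (rule sum.cong) (auto simp: coeff_monom)
  also have "\<dots> = mat_pow X m" by simp
  finally show ?thesis .
qed

lemma D_add: "X \<in> gen_subalg A \<Longrightarrow> Y \<in> gen_subalg A \<Longrightarrow> X + Y \<in> gen_subalg (A::'a::field^'n^'n)"
  unfolding gen_subalg_def by (auto simp: poly_mat_add[symmetric])

lemma D_diff: "X \<in> gen_subalg A \<Longrightarrow> Y \<in> gen_subalg A \<Longrightarrow> X - Y \<in> gen_subalg (A::'a::field^'n^'n)"
  unfolding gen_subalg_def by (auto simp: poly_mat_diff[symmetric])

lemma D_smult: "X \<in> gen_subalg A \<Longrightarrow> mat c ** X \<in> gen_subalg (A::'a::field^'n^'n)"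
  unfolding gen_subalg_def by (auto simp: poly_mat_smult[symmetric])

lemma D_pow: "mat_pow A m \<in> gen_subalg (A::'a::field^'n^'n)"
  unfolding gen_subalg_def by (auto simp: poly_mat_monom[symmetric] intro!: exI[where x="monom 1 m"])

lemma D_zero: "0 \<in> gen_subalg (A::'a::field^'n^'n)"
proof -
  have "mat_pow A 0 - mat_pow A 0 \<in> gen_subalg A" by (rule D_diff[OF D_pow D_pow])
  then show ?thesis by simp
qed

lemma pow_comm1: "mat_pow A k ** A = A ** mat_pow (A::'a::field^'n^'n) k"
  by (induction k) (simp_all add: matrix_mul_assoc[symmetric])

lemma pow_comm: "mat_pow A k ** mat_pow A l = mat_pow A l ** mat_pow (A::'a::field^'n^'n) k"
proof (induction l)
  case 0 then show ?case by simp
next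
  case (Suc l)
  have "mat_pow A k ** mat_pow A (Suc l) = (mat_pow A k ** A) ** mat_pow A l"
    by (simp add: matrix_mul_assoc)
  also have "\<dots> = A ** (mat_pow A k ** mat_pow A l)" by (simp add: pow_comm1 matrix_mul_assoc)
  also have "\<dots> = mat_pow A (Suc l) ** mat_pow A k" by (simp add: Suc matrix_mul_assoc)
  finally show ?case .
qed

lemma poly_comm_gen:
  fixes A Y :: "'a::field^'n^'n"
  assumes "\<And>k. mat_pow A k ** Y = Y ** mat_pow A k"
  shows "poly_mat p A ** Y = Y ** poly_mat p A"
proof -
  have "poly_mat p A ** Y = (\<Sum>k\<le>degree p. mat (coeff p k) ** (mat_pow A k ** Y))"
    by (simp add: poly_mat_def msum_mult matrix_mul_assoc)
  also have "\<dots> = (\<Sum>k\<le>degree p. Y ** (mat (coeff p k) ** mat_pow A k))"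
    by (simp add: assms scal_mid)
  also have "\<dots> = Y ** poly_mat p A" by (simp add: poly_mat_def mult_msum)
  finally show ?thesis .
qed

lemma D_comm: "X \<in> gen_subalg A \<Longrightarrow> Y \<in> gen_subalg A \<Longrightarrow> X ** Y = Y ** (X::'a::field^'n^'n)"
proof -
  assume "X \<in> gen_subalg A" "Y \<in> gen_subalg A"
  then obtain p q where X: "X = poly_mat p A" and Y: "Y = poly_mat q A" by (auto simp: gen_subalg_def)
  have "\<And>k. mat_pow A k ** Y = Y ** mat_pow A k"
    unfolding Y by (rule poly_comm_gen[symmetric]) (rule pow_comm)
  then show ?thesis unfolding X by (rule poly_comm_gen)
qed


section \<open>Rank one arguments\<close>

lemma sum_delta_cond: "(\<Sum>l\<in>UNIV. f l * (if l = b \<and> Q then 1 else 0)) = (if Q then f b else 0)"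
  for f :: "'n::finite \<Rightarrow> 'a::comm_ring_1"
  by (cases Q) (simp_all add: sum_delta_r)

lemma elem_left: "(M::'a::comm_ring_1^'n^'m) ** (\<chi> i j. if i = b \<and> j = c then 1 else 0) = (\<chi> i k. if k = c then M$i$b else 0)"
  unfolding matrix_matrix_mult_def vec_eq_iff by (simp add: sum_delta_cond)

lemma elem_right: "(\<chi> i k. if k = c then M$i$b else 0) ** (N::'a::comm_ring_1^'p^'n) = (\<chi> i j. M$i$b * N$c$j)"
  unfolding matrix_matrix_mult_def vec_eq_iff
proof (intro allI)
  fix i j
  have "(\<Sum>k\<in>UNIV. (\<chi> i k. if k = c then M $ i $ b else 0) $ i $ k * N $ k $ j) = (\<Sum>k\<in>UNIV. if k = c then M $ i $ b * N $ k $ j else 0)"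
    by (rule sum.cong) auto
  then show "(\<chi> i j. \<Sum>k\<in>UNIV. (\<chi> i k. if k = c then M $ i $ b else 0) $ i $ k * N $ k $ j) $ i $ j = (\<chi> i j. M $ i $ b * N $ c $ j) $ i $ j"
    by simp
qed

lemma L1:
  fixes M N :: "'a::field^'n^'n"
  assumes "M \<noteq> 0" "N \<noteq> 0"
  shows "\<exists>P. M ** P ** N \<noteq> 0"
proof -
  obtain a b where ab: "M$a$b \<noteq> 0" using assms(1) by (metis vec_eq_iff zero_index)
  obtain c e where ce: "N$c$e \<noteq> 0" using assms(2) by (metis vec_eq_iff zero_index)
  let ?P = "(\<chi> i j. if i = b \<and> j = c then 1 else 0) :: 'a^'n^'n"
  have "M ** ?P ** N = (\<chi> i j. M$i$b * N$c$j)" by (simp add: elem_left elem_right)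
  then have "(M ** ?P ** N)$a$e \<noteq> 0" using ab ce by simp
  then show ?thesis by (metis zero_index)
qed

definition rk1 :: "('a::field)^'n^'n \<Rightarrow> bool" where
  "rk1 E \<longleftrightarrow> E ** E = E \<and> (\<forall>M. \<exists>c. E ** M ** E = mat c ** E)"

lemma L2:
  fixes M N E :: "'a::field^'n^'n"
  assumes E: "rk1 E" and M: "M ** E = M" "M \<noteq> 0" and N: "E ** N = N" "N \<noteq> 0"
  shows "M ** N \<noteq> 0"
proof
  assume MN: "M ** N = 0"
  obtain P where P: "M ** P ** N \<noteq> 0" using L1 M N by blast
  obtain c where c: "E ** P ** E = mat c ** E" using E unfolding rk1_def by blast
  have "M ** P ** N = (M ** E) ** P ** (E ** N)"
    using M N by simp
  also have "\<dots> = M ** (E ** P ** E) ** N"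
    by (simp add: matrix_mul_assoc)
  also have "\<dots> = M ** (mat c ** E) ** N" by (simp only: c)
  also have "\<dots> = (mat c ** (M ** E)) ** N" by (simp only: scal_mid)
  also have "\<dots> = mat c ** (M ** E ** N)" by (simp only: matrix_mul_assoc)
  also have "\<dots> = mat c ** (M ** N)" using M(1) by simp
  also have "\<dots> = 0" using MN by simp
  finally show False using P by simp
qed

lemma L3:
  fixes M N E F :: "'a::field^'n^'n"
  assumes E: "rk1 E" and F: "rk1 F" and N: "E ** N ** F = N" "N \<noteq> 0"
  shows "\<exists>c. E ** M ** F = mat c ** N"
proof -
  have EE: "E ** E = E" and FF: "F ** F = F" using E F by (auto simp: rk1_def)
  have NF: "N ** F = N" using N(1) FF by (metis matrix_mul_assoc)
  have EN: "E ** N = N" using N(1) EE by (metis matrix_mul_assoc)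
  have "F \<noteq> 0" using NF N(2) by auto
  then obtain P where P: "F ** P ** N \<noteq> 0" using L1 N(2) by blast
  obtain c0 where c0: "F ** (P ** N) ** F = mat c0 ** F" using F unfolding rk1_def by blast
  have "F ** P ** N = F ** P ** (N ** F)" using NF by simp
  also have "\<dots> = F ** (P ** N) ** F" by (simp add: matrix_mul_assoc)
  finally have FPN: "F ** P ** N = mat c0 ** F" using c0 by simp
  have "c0 \<noteq> 0" using FPN P by auto
  let ?Q = "mat (inverse c0) ** F ** P"
  have QN: "?Q ** N = F"
  proof -
    have "?Q ** N = mat (inverse c0) ** (F ** P ** N)" by (simp add: matrix_mul_assoc)
    also have "\<dots> = F" using \<open>c0 \<noteq> 0\<close> by (simp add: FPN matrix_mul_assoc mat_mat)
    finally show ?thesis .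
  qed
  obtain c1 where c1: "E ** (M ** F ** ?Q) ** E = mat c1 ** E" using E unfolding rk1_def by blast
  have "E ** M ** F = E ** M ** (F ** F)" using FF by simp
  also have "\<dots> = E ** M ** F ** (?Q ** N)" by (simp only: QN matrix_mul_assoc)
  also have "\<dots> = E ** (M ** F ** ?Q) ** (E ** N)" by (simp only: EN matrix_mul_assoc)
  also have "\<dots> = E ** (M ** F ** ?Q) ** E ** N" by (simp only: matrix_mul_assoc)
  also have "\<dots> = mat c1 ** E ** N" by (simp only: c1)
  also have "\<dots> = mat c1 ** N" by (simp only: matrix_mul_assoc[symmetric] EN)
  finally show ?thesis by blast
qed


theorem corollary3p3:
  fixes A As :: "('a::field)^'n^'n"
    and E Es :: "nat \<Rightarrow> 'a^'n^'n"
    and d :: nat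
    and sc :: "'a \<Rightarrow> 'v::ab_group_add \<Rightarrow> 'v"
    and act :: "'a^'n^'n \<Rightarrow> 'v \<Rightarrow> 'v"
    and v0 :: 'v
  assumes d: "CARD('n) = d + 1"
    and mfA: "multiplicity_free A" and mfAs: "multiplicity_free As"
    and E: "idem_ordering A E" and Es: "idem_ordering As Es"
    and V: "irreducible_module sc act"
    and zero: "\<And>i j. i \<le> d \<Longrightarrow> j \<le> d \<Longrightarrow> i > j + 1 \<Longrightarrow> Es i ** A ** Es j = 0"
    and nonzero: "\<And>i j. i \<le> d \<Longrightarrow> j \<le> d \<Longrightarrow> i = j + 1 \<Longrightarrow> Es i ** A ** Es j \<noteq> 0"
    and v0: "v0 \<noteq> 0" "v0 \<in> range (act (Es 0))"
  shows "bij_betw (\<lambda>X. act X v0) (gen_subalg A) UNIV"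
proof -
  let ?n = "CARD('n)"
  obtain \<theta> where mf\<theta>: "mf_eigs As \<theta>" and EsD: "\<forall>i<?n. Es i = prim_idem As \<theta> i"
    using Es unfolding idem_ordering_def by blast
  have "\<forall>i. \<exists>v. i < ?n \<longrightarrow> v \<noteq> 0 \<and> As *v v = \<theta> i *s v"
    using mf\<theta> unfolding mf_eigs_def by blast
  then obtain vv where vv: "\<forall>k<?n. vv k \<noteq> 0 \<and> As *v vv k = \<theta> k *s vv k"
    using choice[of "\<lambda>i v. i < ?n \<longrightarrow> v \<noteq> 0 \<and> As *v v = \<theta> i *s v"] by blast
  have Pn1: "Es i ** Es j = (if i = j then Es i else 0)" if "i < ?n" "j < ?n" for i j
    using P1[OF mf\<theta> vv that] EsD that by simp
  have Pn2: "(\<Sum>i<?n. Es i) = mat 1"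
    using P2[OF mf\<theta> vv] EsD by simp
  have rk: "rk1 (Es i)" if "i < ?n" for i
    using P3[OF mf\<theta> vv that] Pn1[OF that that] EsD that unfolding rk1_def by simp
  have idem: "Es i ** Es i = Es i" if "i < ?n" for i using Pn1[OF that that] by simp
  have idem2: "X ** Es i ** Es i = X ** Es i" if "i < ?n" for i and X :: "'a^'n^'n"
    using idem[OF that] by (simp add: matrix_mul_assoc[symmetric])
  have n0: "0 < ?n" by simp

  have alg: "alg_module sc act" using V unfolding irreducible_module_def by simp
  have Vs: "vector_space sc" using alg unfolding alg_module_def by simp
  have am: "\<And>X Y v. act (X ** Y) v = act X (act Y v)" using alg unfolding alg_module_def by simp
  have aadd: "\<And>X Y v. act (X + Y) v = act X v + act Y v" using alg unfolding alg_module_def by simp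
  have avadd: "\<And>X u w. act X (u + w) = act X u + act X w" using alg unfolding alg_module_def by simp
  have asc: "\<And>c X v. act (mat c ** X) v = sc c (act X v)" using alg unfolding alg_module_def by blast
  have irr: "\<And>W. 0 \<in> W \<Longrightarrow> (\<forall>u\<in>W. \<forall>w\<in>W. u + w \<in> W) \<Longrightarrow> (\<forall>X. \<forall>w\<in>W. act X w \<in> W) \<Longrightarrow> W = {0} \<or> W = UNIV"
    using V unfolding irreducible_module_def by simp
  have a0v: "act X 0 = 0" for X
  proof -
    have "act X 0 = act X 0 + act X 0" using avadd[of X 0 0] by simp
    then show ?thesis by simp
  qed
  have a0: "act 0 v = 0" for v
  proof -
    have "act 0 v = act 0 v + act 0 v" using aadd[of 0 0 v] by simp
    then show ?thesis by simp
  qed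
  have adiff: "act (X - Y) v = act X v - act Y v" for X Y v
    using aadd[of "X - Y" Y v] by (simp add: eq_diff_eq)
  obtain w where w: "v0 = act (Es 0) w" using v0(2) by blast
  have E0v: "act (Es 0) v0 = v0" using w by (simp add: am[symmetric] idem[OF n0])
  have E0nz: "Es 0 \<noteq> 0" using w a0 v0(1) by auto

  have N1: "act N v0 \<noteq> 0" if N: "N ** Es 0 = N" "N \<noteq> 0" for N
  proof
    assume Nv: "act N v0 = 0"
    obtain P where P: "Es 0 ** P ** N \<noteq> 0" using L1[OF E0nz N(2)] by blast
    obtain c where c: "Es 0 ** (P ** N) ** Es 0 = mat c ** Es 0" using rk[OF n0] unfolding rk1_def by blast
    have "Es 0 ** P ** N = Es 0 ** P ** (N ** Es 0)" using N by simp
    also have "\<dots> = Es 0 ** (P ** N) ** Es 0" by (simp add: matrix_mul_assoc)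
    finally have EPN: "Es 0 ** P ** N = mat c ** Es 0" using c by simp
    then have "c \<noteq> 0" using P by auto
    have "act (Es 0 ** P ** N) v0 = 0" using Nv by (simp add: am a0v)
    moreover have "act (Es 0 ** P ** N) v0 = sc c v0" using EPN asc E0v by simp
    ultimately have "sc c v0 = 0" by simp
    then show False using \<open>c \<noteq> 0\<close> v0(1) vector_space.scale_eq_0_iff[OF Vs] by simp
  qed

  have T: "k \<le> d \<longrightarrow> (\<forall>j. j \<le> d \<longrightarrow> k < j \<longrightarrow> Es j ** mat_pow A k ** Es 0 = 0) \<and> Es k ** mat_pow A k ** Es 0 \<noteq> 0" for k
  proof (induction k)
    case 0
    show ?case
    proof (intro impI conjI allI)
      fix j assume j: "j \<le> d" "0 < j"
      then have jn: "j < ?n" and j0: "j \<noteq> 0" using d by auto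
      have "Es j ** Es 0 = 0" using Pn1[OF jn n0] unfolding if_not_P[OF j0] .
      then show "Es j ** mat_pow A 0 ** Es 0 = 0" by (simp only: mat_pow.simps(1) matrix_mul_rid)
    next
      show "Es 0 ** mat_pow A 0 ** Es 0 \<noteq> 0"
        using E0nz by (simp only: mat_pow.simps(1) matrix_mul_rid idem[OF n0] not_False_eq_True)
    qed
  next
    case (Suc k)
    show ?case
    proof (intro impI)
      assume kd: "Suc k \<le> d"
      then have IH1: "\<And>j. j \<le> d \<Longrightarrow> k < j \<Longrightarrow> Es j ** mat_pow A k ** Es 0 = 0"
        and IH2: "Es k ** mat_pow A k ** Es 0 \<noteq> 0" using Suc by auto
      have key: "Es j ** mat_pow A (Suc k) ** Es 0 = (\<Sum>l<?n. (Es j ** A ** Es l) ** (Es l ** mat_pow A k ** Es 0))" for j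
      proof -
        have "Es j ** mat_pow A (Suc k) ** Es 0 = Es j ** A ** (\<Sum>l<?n. Es l) ** mat_pow A k ** Es 0"
          by (simp add: Pn2 matrix_mul_assoc)
        also have "\<dots> = (\<Sum>l<?n. Es j ** A ** Es l ** mat_pow A k ** Es 0)"
          by (simp add: mult_msum msum_mult)
        also have "\<dots> = (\<Sum>l<?n. (Es j ** A ** Es l) ** (Es l ** mat_pow A k ** Es 0))"
        proof (rule sum.cong)
          fix l assume "l \<in> {..<?n}"
          then have l: "l < ?n" by simp
          show "Es j ** A ** Es l ** mat_pow A k ** Es 0 = (Es j ** A ** Es l) ** (Es l ** mat_pow A k ** Es 0)"
            by (simp only: matrix_mul_assoc idem2[OF l])
        qed simp
        finally show ?thesis .
      qed
      have part1: "Es j ** mat_pow A (Suc k) ** Es 0 = 0" if j: "j \<le> d" "Suc k < j" for j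
      proof -
        have "(Es j ** A ** Es l) ** (Es l ** mat_pow A k ** Es 0) = 0" if l: "l < ?n" for l
        proof (cases "l \<le> k")
          case True
          then have "Es j ** A ** Es l = 0" using zero[of j l] j l d by simp
          then show ?thesis by simp
        next
          case False
          then have "Es l ** mat_pow A k ** Es 0 = 0" using IH1[of l] l d by simp
          then show ?thesis by simp
        qed
        then show ?thesis using key by simp
      qed
      have part2: "Es (Suc k) ** mat_pow A (Suc k) ** Es 0 \<noteq> 0"
      proof -
        let ?T = "\<lambda>l. (Es (Suc k) ** A ** Es l) ** (Es l ** mat_pow A k ** Es 0)"
        have kn: "k < ?n" using kd d by simp
        have "(\<Sum>l<?n. ?T l) = (\<Sum>l<?n. if l = k then ?T k else 0)"
        proof (rule sum.cong)
          fix l assume l: "l \<in> {..<?n}"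
          show "?T l = (if l = k then ?T k else 0)"
          proof (cases "l = k")
            case True
            show ?thesis unfolding True by (rule if_P[symmetric]) (rule refl)
          next
            case False
            note lk = False
            show ?thesis
            proof (cases "l < k")
              case True
              have z: "Es (Suc k) ** A ** Es l = 0"
                by (rule zero) (use kd l d True in auto)
              show ?thesis unfolding if_not_P[OF lk] z by (rule times0_left)
            next
              case False
              have z: "Es l ** mat_pow A k ** Es 0 = 0"
                by (rule IH1) (use lk False l d in auto)
              show ?thesis unfolding if_not_P[OF lk] z by (rule times0_right)
            qed
          qed
        qed (rule refl)
        also have "\<dots> = ?T k"
          by (subst sum.delta) (use kn in auto)
        finally have eq: "Es (Suc k) ** mat_pow A (Suc k) ** Es 0 = ?T k"
          using key[of "Suc k"] by (rule trans[rotated])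
        have "?T k \<noteq> 0"
        proof (rule L2[OF rk[OF kn]])
          show "Es (Suc k) ** A ** Es k ** Es k = Es (Suc k) ** A ** Es k" by (rule idem2[OF kn])
          show "Es (Suc k) ** A ** Es k \<noteq> 0" by (rule nonzero) (use kd in auto)
          show "Es k ** (Es k ** mat_pow A k ** Es 0) = Es k ** mat_pow A k ** Es 0"
            by (simp only: matrix_mul_assoc idem[OF kn])
          show "Es k ** mat_pow A k ** Es 0 \<noteq> 0" by (rule IH2)
        qed
        then show ?thesis unfolding eq .
      qed
      show "(\<forall>j. j \<le> d \<longrightarrow> Suc k < j \<longrightarrow> Es j ** mat_pow A (Suc k) ** Es 0 = 0) \<and> Es (Suc k) ** mat_pow A (Suc k) ** Es 0 \<noteq> 0"
        using part1 part2 by blast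
    qed
  qed

  have S: "m \<le> ?n \<longrightarrow> (\<forall>M. \<exists>X\<in>gen_subalg A. (\<Sum>j<m. Es j) ** M ** Es 0 = X ** Es 0)" for m
  proof (induction m)
    case 0
    show ?case
    proof (intro impI allI bexI)
      fix M :: "'a^'n^'n"
      show "(\<Sum>j<0. Es j) ** M ** Es 0 = 0 ** Es 0" by (simp only: lessThan_0 sum.empty times0_left)
    qed (rule D_zero)
  next
    case (Suc m)
    show ?case
    proof (intro impI allI)
      fix M :: "'a^'n^'n"
      assume mn: "Suc m \<le> ?n"
      then have mn': "m < ?n" and md: "m \<le> d" using d by auto
      obtain X1 where X1: "X1 \<in> gen_subalg A" "(\<Sum>j<m. Es j) ** M ** Es 0 = X1 ** Es 0"
        using Suc mn by auto
      obtain Y1 where Y1: "Y1 \<in> gen_subalg A" "(\<Sum>j<m. Es j) ** mat_pow A m ** Es 0 = Y1 ** Es 0"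
        using Suc mn by auto
      let ?N = "Es m ** mat_pow A m ** Es 0"
      have Nnz: "?N \<noteq> 0" using T[of m] md by blast
      have ENF: "Es m ** ?N ** Es 0 = ?N"
        by (simp only: matrix_mul_assoc idem[OF mn'] idem2[OF n0])
      obtain c where c: "Es m ** M ** Es 0 = mat c ** ?N"
        using L3[OF rk[OF mn'] rk[OF n0] ENF Nnz] by blast
      have Nexp: "mat_pow A m ** Es 0 = Y1 ** Es 0 + ?N"
      proof -
        have "mat_pow A m ** Es 0 = (\<Sum>j<?n. Es j) ** mat_pow A m ** Es 0"
          by (simp only: Pn2 matrix_mul_lid)
        also have "\<dots> = (\<Sum>j<?n. Es j ** mat_pow A m ** Es 0)"
          by (simp only: msum_mult)
        also have "\<dots> = (\<Sum>j<Suc m. Es j ** mat_pow A m ** Es 0)"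
        proof (rule sum.mono_neutral_right)
          show "\<forall>j\<in>{..<?n} - {..<Suc m}. Es j ** mat_pow A m ** Es 0 = 0"
          proof
            fix j assume "j \<in> {..<?n} - {..<Suc m}"
            then have "j \<le> d" "m < j" using d by auto
            then show "Es j ** mat_pow A m ** Es 0 = 0" using T[of m] md by blast
          qed
        qed (use mn in auto)
        also have "\<dots> = (\<Sum>j<m. Es j ** mat_pow A m ** Es 0) + ?N"
          by (rule sum.lessThan_Suc)
        also have "\<dots> = (\<Sum>j<m. Es j) ** mat_pow A m ** Es 0 + ?N"
          by (simp only: msum_mult)
        also have "\<dots> = Y1 ** Es 0 + ?N" by (simp only: Y1(2))
        finally show ?thesis .
      qed
      have Nval: "?N = mat_pow A m ** Es 0 - Y1 ** Es 0" using Nexp by (simp add: algebra_simps)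
      have "(\<Sum>j<Suc m. Es j) ** M ** Es 0 = (\<Sum>j<m. Es j) ** M ** Es 0 + Es m ** M ** Es 0"
        by (simp only: sum.lessThan_Suc matrix_add_rdistrib)
      also have "\<dots> = X1 ** Es 0 + mat c ** (mat_pow A m ** Es 0 - Y1 ** Es 0)"
        by (simp only: X1(2) c Nval)
      also have "\<dots> = (X1 + mat c ** (mat_pow A m - Y1)) ** Es 0"
        by (simp only: matrix_add_rdistrib matrix_diff_rdistrib matrix_diff_ldistrib matrix_mul_assoc)
      finally show "\<exists>X\<in>gen_subalg A. (\<Sum>j<Suc m. Es j) ** M ** Es 0 = X ** Es 0"
        using X1(1) Y1(1) by (blast intro: D_add D_smult D_diff D_pow)
    qed
  qed
  have cyc: "\<exists>X\<in>gen_subalg A. M ** Es 0 = X ** Es 0" for M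
    using S[of ?n] Pn2 by simp

  have a1: "act (mat 1) v = v" for v using alg unfolding alg_module_def by blast
  have surj: "(\<lambda>X. act X v0) ` gen_subalg A = UNIV"
  proof -
    let ?W = "range (\<lambda>M. act M v0)"
    have "?W = {0} \<or> ?W = UNIV"
    proof (rule irr)
      show "0 \<in> ?W" using a0[of v0] by (metis rangeI)
      show "\<forall>u\<in>?W. \<forall>w\<in>?W. u + w \<in> ?W"
      proof (intro ballI)
        fix u w assume "u \<in> ?W" "w \<in> ?W"
        then obtain M1 M2 where "u = act M1 v0" "w = act M2 v0" by blast
        then have "u + w = act (M1 + M2) v0" by (simp add: aadd)
        then show "u + w \<in> ?W" by blast
      qed
      show "\<forall>X. \<forall>w\<in>?W. act X w \<in> ?W"
      proof (intro allI ballI)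
        fix X w assume "w \<in> ?W"
        then obtain M where "w = act M v0" by blast
        then have "act X w = act (X ** M) v0" by (simp add: am)
        then show "act X w \<in> ?W" by blast
      qed
    qed
    moreover have "v0 \<in> ?W" using a1[of v0] by (metis rangeI)
    ultimately have W: "?W = UNIV" using v0(1) by blast
    show ?thesis
    proof (rule set_eqI, rule iffI)
      fix u :: 'v assume "u \<in> UNIV"
      then obtain M where u: "u = act M v0" using W by blast
      obtain X where X: "X \<in> gen_subalg A" "M ** Es 0 = X ** Es 0" using cyc by blast
      have "u = act (M ** Es 0) v0" using u E0v by (simp add: am)
      also have "\<dots> = act X v0" using X(2) E0v by (simp add: am)
      finally show "u \<in> (\<lambda>X. act X v0) ` gen_subalg A" using X(1) by blast
    qed simp
  qed
  have inj: "inj_on (\<lambda>X. act X v0) (gen_subalg A)"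
  proof (rule inj_onI)
    fix X Y assume X: "X \<in> gen_subalg A" and Y: "Y \<in> gen_subalg A" and eq: "act X v0 = act Y v0"
    let ?Z = "X - Y"
    have ZD: "?Z \<in> gen_subalg A" using X Y by (rule D_diff)
    have "act ?Z v0 = 0" using eq by (simp add: adiff)
    then have "act (?Z ** Es 0) v0 = 0" using E0v by (simp add: am)
    then have ZE: "?Z ** Es 0 = 0"
      using N1[of "?Z ** Es 0"] by (metis idem2[OF n0])
    have "?Z ** M ** Es 0 = 0" for M
    proof -
      obtain Y' where Y': "Y' \<in> gen_subalg A" "M ** Es 0 = Y' ** Es 0" using cyc by blast
      have "?Z ** M ** Es 0 = ?Z ** (M ** Es 0)" by (simp only: matrix_mul_assoc)
      also have "\<dots> = ?Z ** (Y' ** Es 0)" by (simp only: Y'(2))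
      also have "\<dots> = Y' ** (?Z ** Es 0)" by (simp only: matrix_mul_assoc D_comm[OF ZD Y'(1)])
      also have "\<dots> = 0" by (simp only: ZE times0_right)
      finally show ?thesis .
    qed
    then have "?Z = 0" using L1[OF _ E0nz] by blast
    then show "X = Y" by simp
  qed
  show ?thesis unfolding bij_betw_def using inj surj by blast
qed

end
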